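(* Let $\kappa$ be an infinite cardinal and let $\mathbb P$ be a forcing notion satisfying Property B$(\kappa)$. Then forcing with $\mathbb P$ preserves $\kappa^+$ (i.e. $(\kappa^+)^{\mathbf V}$ remains a cardinal in $\mathbf V[G]$ for every $\mathbb P$-generic $G$).
   Context: Convention: $p\le q$ means $q$ is the stronger condition. A forcing notion $\mathbb P=(P,\le)$ satisfies Property B$(\kappa)$ if: (1) there is a sequence $\langle \le_\zeta:\zeta<\kappa\rangle$ of partial orders on $P$ with $\le_0=\le$ and $\xi<\zeta\Rightarrow \le_\xi\supseteq\le_\zeta$; (2) for limit $\delta\in(0,\kappa)$, $\le_\delta=\bigcap_{\zeta<\delta}\le_\zeta$; (3) (Fusion) for a limit ordinal $\delta\le\kappa$, a $\delta$-fusion sequence is a sequence $\langle p_\zeta:\zeta<\delta\rangle$ with $p_\zeta\le_\zeta p_{\zeta+1}$ for every $\zeta$ and $p_\zeta\le p_\varepsilon$ whenever $\varepsilon<\delta$ is limit and $\zeta<\varepsilon$; Fusion states that for every limit $\delta\le\kappa$ and every $\delta$-fusion sequence there is $q$ with $p_\zeta\le_\zeta q$ for all $\zeta<\delta$; (4) (Mastering $\kappa$) for every dense $\mathcal D\subseteq P$, every $p\in P$ and every $\zeta<\kappa$ there are $q$ with $p\le_\zeta q$ and $\mathcal D'\subseteq\mathcal D$ with $|\mathcal D'|\le\kappa$ such that $\mathcal D'$ is predense above $q$. *)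

theory Defs
  imports Main
begin

text \<open>Ordinals below kappa are the elements of a wellorder type 'k whose order is a
cardinal order (initial ordinal) of the cardinality kappa.\<close>

definition kzero :: "'k::wellorder" where
  "kzero = (LEAST z. True)"

definition ksucc :: "'k::wellorder \<Rightarrow> 'k" where
  "ksucc z = (LEAST e. z < e)"

definition klimit :: "'k::wellorder \<Rightarrow> bool" where
  "klimit d \<longleftrightarrow> d \<noteq> kzero \<and> (\<forall>z. z < d \<longrightarrow> (\<exists>e. z < e \<and> e < d))"

definition po_on :: "'p set \<Rightarrow> ('p \<Rightarrow> 'p \<Rightarrow> bool) \<Rightarrow> bool" where
  "po_on P R \<longleftrightarrow> (\<forall>x\<in>P. R x x)
     \<and> (\<forall>x\<in>P. \<forall>y\<in>P. \<forall>z\<in>P. R x y \<longrightarrow> R y z \<longrightarrow> R x z)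
     \<and> (\<forall>x\<in>P. \<forall>y\<in>P. R x y \<longrightarrow> R y x \<longrightarrow> x = y)"

text \<open>Convention: leq p q means q is the stronger condition.\<close>

definition compatible :: "'p set \<Rightarrow> ('p \<Rightarrow> 'p \<Rightarrow> bool) \<Rightarrow> 'p \<Rightarrow> 'p \<Rightarrow> bool" where
  "compatible P leq p q \<longleftrightarrow> (\<exists>s\<in>P. leq p s \<and> leq q s)"

definition dense :: "'p set \<Rightarrow> ('p \<Rightarrow> 'p \<Rightarrow> bool) \<Rightarrow> 'p set \<Rightarrow> bool" where
  "dense P leq D \<longleftrightarrow> D \<subseteq> P \<and> (\<forall>p\<in>P. \<exists>d\<in>D. leq p d)"

definition predense_above :: "'p set \<Rightarrow> ('p \<Rightarrow> 'p \<Rightarrow> bool) \<Rightarrow> 'p set \<Rightarrow> 'p \<Rightarrow> bool" where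
  "predense_above P leq D q \<longleftrightarrow>
     (\<forall>r\<in>P. leq q r \<longrightarrow> (\<exists>d\<in>D. compatible P leq r d))"

text \<open>Delta-fusion sequence, where the index set I is {z. z < d} for a limit d < kappa,
or UNIV for d = kappa.\<close>

definition fusion_seq :: "'p set \<Rightarrow> ('p \<Rightarrow> 'p \<Rightarrow> bool) \<Rightarrow> ('k::wellorder \<Rightarrow> 'p \<Rightarrow> 'p \<Rightarrow> bool)
    \<Rightarrow> 'k set \<Rightarrow> ('k \<Rightarrow> 'p) \<Rightarrow> bool" where
  "fusion_seq P leq lz I p \<longleftrightarrow>
     (\<forall>z\<in>I. p z \<in> P)
     \<and> (\<forall>z\<in>I. lz z (p z) (p (ksucc z)))
     \<and> (\<forall>e\<in>I. klimit e \<longrightarrow> (\<forall>z. z < e \<longrightarrow> leq (p z) (p e)))"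

definition fusion_ok :: "'p set \<Rightarrow> ('p \<Rightarrow> 'p \<Rightarrow> bool) \<Rightarrow> ('k::wellorder \<Rightarrow> 'p \<Rightarrow> 'p \<Rightarrow> bool)
    \<Rightarrow> 'k set \<Rightarrow> bool" where
  "fusion_ok P leq lz I \<longleftrightarrow>
     (\<forall>p. fusion_seq P leq lz I p \<longrightarrow> (\<exists>q\<in>P. \<forall>z\<in>I. lz z (p z) q))"

text \<open>Property B(kappa); kappa is represented by the wellorder type 'k.
|D'| <= kappa is expressed as: D' is contained in the range of a map from kappa.\<close>

definition propertyB :: "'p set \<Rightarrow> ('p \<Rightarrow> 'p \<Rightarrow> bool) \<Rightarrow> ('k::wellorder \<Rightarrow> 'p \<Rightarrow> 'p \<Rightarrow> bool) \<Rightarrow> bool" where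
  "propertyB P leq lz \<longleftrightarrow>
     po_on P leq
     \<comment> \<open>(1)\<close>
     \<and> (\<forall>z. po_on P (lz z))
     \<and> (\<forall>x\<in>P. \<forall>y\<in>P. lz kzero x y \<longleftrightarrow> leq x y)
     \<and> (\<forall>a b. a < b \<longrightarrow> (\<forall>x\<in>P. \<forall>y\<in>P. lz b x y \<longrightarrow> lz a x y))
     \<comment> \<open>(2)\<close>
     \<and> (\<forall>d. klimit d \<longrightarrow> (\<forall>x\<in>P. \<forall>y\<in>P. lz d x y \<longleftrightarrow> (\<forall>z. z < d \<longrightarrow> lz z x y)))
     \<comment> \<open>(3) fusion, for limit d < kappa and for d = kappa\<close>
     \<and> (\<forall>d. klimit d \<longrightarrow> fusion_ok P leq lz {z. z < d})
     \<and> fusion_ok P leq lz UNIV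
     \<comment> \<open>(4) mastering kappa\<close>
     \<and> (\<forall>D p z. dense P leq D \<longrightarrow> p \<in> P \<longrightarrow>
          (\<exists>q\<in>P. lz z p q \<and> (\<exists>D' f. D' \<subseteq> D \<and> D' \<subseteq> range (f :: 'k \<Rightarrow> 'p)
                                   \<and> predense_above P leq D' q)))"

text \<open>A P-name for a function from kappa onto C, forced by p, coded by
h alpha q = Some beta meaning q forces f(alpha) = beta.\<close>

definition collapse_name :: "'p set \<Rightarrow> ('p \<Rightarrow> 'p \<Rightarrow> bool) \<Rightarrow> 'p \<Rightarrow> 'c set
    \<Rightarrow> ('k \<Rightarrow> 'p \<Rightarrow> 'c option) \<Rightarrow> bool" where
  "collapse_name P leq p C h \<longleftrightarrow>
     (\<forall>a. \<forall>q\<in>P. leq p q \<longrightarrow> (\<exists>r\<in>P. leq q r \<and> h a r \<noteq> None))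
     \<and> (\<forall>a. \<forall>q\<in>P. \<forall>r\<in>P. leq p q \<longrightarrow> leq q r \<longrightarrow> h a q \<noteq> None \<longrightarrow> h a r = h a q)
     \<and> (\<forall>a. \<forall>q\<in>P. leq p q \<longrightarrow> h a q \<noteq> None \<longrightarrow> the (h a q) \<in> C)
     \<and> (\<forall>b\<in>C. \<forall>q\<in>P. leq p q \<longrightarrow> (\<exists>a. \<exists>r\<in>P. leq q r \<and> h a r = Some b))"

text \<open>Forcing with P preserves |C| (here C of size kappa^+): no condition forces
a surjection from kappa onto C.\<close>

definition preserves_card :: "'p set \<Rightarrow> ('p \<Rightarrow> 'p \<Rightarrow> bool) \<Rightarrow> 'k itself \<Rightarrow> 'c set \<Rightarrow> bool" where
  "preserves_card P leq K C \<longleftrightarrow>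
     (\<forall>p\<in>P. \<not> (\<exists>h :: 'k \<Rightarrow> 'p \<Rightarrow> 'c option. collapse_name P leq p C h))"

end

theory Submission
  imports Defs
begin

lemma ksucc_gt:
  fixes a :: "'k::wellorder"
  assumes "\<forall>x::'k. \<exists>y. x < y"
  shows "a < ksucc a"
  unfolding ksucc_def using assms by (meson LeastI_ex)

lemma ksucc_least:
  fixes a :: "'k::wellorder"
  shows "a < b \<Longrightarrow> ksucc a \<le> b"
  unfolding ksucc_def by (rule Least_le)

lemma kzero_le: "kzero \<le> (x::'k::wellorder)"
  unfolding kzero_def by (rule Least_le) simp

lemma ksucc_inj:
  fixes a :: "'k::wellorder"
  assumes "\<forall>x::'k. \<exists>y. x < y" and "ksucc a = ksucc b"
  shows "a = b"
proof (rule ccontr)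
  assume "a \<noteq> b"
  then have "a < b \<or> b < a" by auto
  then show False
    using ksucc_least ksucc_gt[OF assms(1)] assms(2) by (metis leD)
qed

lemma ksucc_nz:
  fixes a :: "'k::wellorder"
  assumes "\<forall>x::'k. \<exists>y. x < y"
  shows "ksucc a \<noteq> kzero"
  using ksucc_gt[OF assms, of a] kzero_le[of a] by auto

lemma klimit_not_succ:
  fixes a :: "'k::wellorder"
  assumes "klimit z" and nm: "\<forall>x::'k. \<exists>y. x < y"
  shows "z \<noteq> ksucc a"
proof
  assume z: "z = ksucc a"
  have "a < z"
    using ksucc_gt[OF nm, of a] z by simp
  then obtain e where "a < e" "e < z" using assms unfolding klimit_def by blast
  then show False using z ksucc_least[of a e] by auto
qed

lemma k_cases:
  fixes z :: "'k::wellorder"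
  assumes "\<forall>x::'k. \<exists>y. x < y"
  shows "z = kzero \<or> (\<exists>y. z = ksucc y) \<or> klimit z"
proof -
  { assume a: "z \<noteq> kzero" "\<not>(\<exists>y. z = ksucc y)"
    have "klimit z" unfolding klimit_def
    proof (intro conjI allI impI)
      show "z \<noteq> kzero" using a by simp
      fix w assume "w < z"
      then have "ksucc w \<le> z" by (rule ksucc_least)
      moreover have "ksucc w \<noteq> z" using a by auto
      ultimately show "\<exists>e. w < e \<and> e < z" using ksucc_gt[OF assms, of w] by auto
    qed }
  then show ?thesis by blast
qed

theorem lemma3p4:
  fixes P :: "'p set" and leq :: "'p \<Rightarrow> 'p \<Rightarrow> bool"
    and lz :: "'k::wellorder \<Rightarrow> 'p \<Rightarrow> 'p \<Rightarrow> bool" and C :: "'c set"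
  assumes "card_order {(x::'k, y). x \<le> y}"
    and "infinite (UNIV :: 'k set)"
    and "ordIso2 (card_of C) (cardSuc (card_of (UNIV :: 'k set)))"
    and "propertyB P leq lz"
  shows "preserves_card P leq TYPE('k) C"
proof -
  have nm: "\<forall>x::'k. \<exists>y. x < y"
  proof
    fix a :: 'k
    have co: "Card_order {(x::'k, y). x \<le> y}" and fld: "Field {(x::'k, y). x \<le> y} = UNIV"
      using card_order_on_Card_order[OF assms(1)] by auto
    have "\<exists>b \<in> Field {(x::'k, y). x \<le> y}. a \<noteq> b \<and> (a,b) \<in> {(x::'k, y). x \<le> y}"
      by (rule infinite_Card_order_limit[OF co]) (simp_all add: fld assms(2))
    then show "\<exists>y. a < y" using order.not_eq_order_implies_strict by fastforce
  qed
  note B = assms(4)[unfolded propertyB_def]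
  have po: "po_on P leq" using B[THEN conjunct1] by blast
  have lz0: "\<And>x y. x\<in>P \<Longrightarrow> y\<in>P \<Longrightarrow> lz kzero x y \<longleftrightarrow> leq x y" using B[THEN conjunct2, THEN conjunct2, THEN conjunct1] by blast
  have lzmono: "\<And>a b x y. a < b \<Longrightarrow> x\<in>P \<Longrightarrow> y\<in>P \<Longrightarrow> lz b x y \<Longrightarrow> lz a x y" using B[THEN conjunct2, THEN conjunct2, THEN conjunct2, THEN conjunct1] by blast
  have fusL: "\<And>d. klimit d \<Longrightarrow> fusion_ok P leq lz {z. z < d}" using B[THEN conjunct2, THEN conjunct2, THEN conjunct2, THEN conjunct2, THEN conjunct2, THEN conjunct1] by blast
  have fusK: "fusion_ok P leq lz UNIV" using B[THEN conjunct2, THEN conjunct2, THEN conjunct2, THEN conjunct2, THEN conjunct2, THEN conjunct2, THEN conjunct1] by blast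
  have mast: "\<And>D p z. dense P leq D \<Longrightarrow> p \<in> P \<Longrightarrow> (\<exists>q\<in>P. lz z p q \<and> (\<exists>D' f. D' \<subseteq> D \<and> D' \<subseteq> range (f :: 'k \<Rightarrow> 'p) \<and> predense_above P leq D' q))"
    using B[THEN conjunct2, THEN conjunct2, THEN conjunct2, THEN conjunct2, THEN conjunct2, THEN conjunct2, THEN conjunct2] by blast
  have lzleq: "leq x y" if "x\<in>P" "y\<in>P" "lz z x y" for z x y
  proof (cases "z = kzero")
    case True then show ?thesis using that lz0 by blast
  next
    case False
    then have "kzero < z" using kzero_le[of z] by auto
    then show ?thesis using that lz0 lzmono by blast
  qed
  have refl: "\<And>x. x\<in>P \<Longrightarrow> leq x x" using po unfolding po_on_def by blast
  have trans: "\<And>x y z. x\<in>P \<Longrightarrow> y\<in>P \<Longrightarrow> z\<in>P \<Longrightarrow> leq x y \<Longrightarrow> leq y z \<Longrightarrow> leq x z"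
    using po unfolding po_on_def by blast
  show ?thesis unfolding preserves_card_def
  proof (intro ballI notI)
    fix p assume pP: "p \<in> P"
    assume "\<exists>h :: 'k \<Rightarrow> 'p \<Rightarrow> 'c option. collapse_name P leq p C h"
    then obtain h :: "'k \<Rightarrow> 'p \<Rightarrow> 'c option" where cn: "collapse_name P leq p C h" by blast
    have h1: "\<And>a q. q\<in>P \<Longrightarrow> leq p q \<Longrightarrow> \<exists>r\<in>P. leq q r \<and> h a r \<noteq> None"
      using cn unfolding collapse_name_def by blast
    have h2: "\<And>a q r. q\<in>P \<Longrightarrow> r\<in>P \<Longrightarrow> leq p q \<Longrightarrow> leq q r \<Longrightarrow> h a q \<noteq> None \<Longrightarrow> h a r = h a q"
      using cn unfolding collapse_name_def by blast
    have h4: "\<And>b q. b\<in>C \<Longrightarrow> q\<in>P \<Longrightarrow> leq p q \<Longrightarrow> \<exists>a. \<exists>r\<in>P. leq q r \<and> h a r = Some b"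
      using cn unfolding collapse_name_def by blast
    define D where "D a = {r\<in>P. (h a r \<noteq> None \<and> leq p r) \<or> \<not> compatible P leq p r}" for a
    have Ddense: "dense P leq (D a)" for a
      unfolding dense_def
    proof (intro conjI ballI)
      show "D a \<subseteq> P" unfolding D_def by blast
      fix p' assume p'P: "p' \<in> P"
      show "\<exists>d\<in>D a. leq p' d"
      proof (cases "compatible P leq p p'")
        case True
        then obtain s where s: "s\<in>P" "leq p s" "leq p' s" unfolding compatible_def by blast
        obtain r where r: "r\<in>P" "leq s r" "h a r \<noteq> None" using h1[OF s(1) s(2)] by blast
        have "leq p r" "leq p' r" using trans[OF pP s(1) r(1) s(2) r(2)] trans[OF p'P s(1) r(1) s(3) r(2)] .
        then show ?thesis using r unfolding D_def by blast
      next
        case False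
        then show ?thesis using p'P refl unfolding D_def by blast
      qed
    qed
    define MS where "MS a q = (\<exists>D' f. D' \<subseteq> D a \<and> D' \<subseteq> range (f::'k\<Rightarrow>'p) \<and> predense_above P leq D' q)" for a q
    define M where "M a x = (SOME q. q\<in>P \<and> lz a x q \<and> MS a q)" for a x
    have Mprop: "M a x \<in> P \<and> lz a x (M a x) \<and> MS a (M a x)" if "x\<in>P" for a x
    proof -
      from mast[OF Ddense[of a] that, of a] have "\<exists>q. q\<in>P \<and> lz a x q \<and> MS a q" unfolding MS_def by blast
      then show ?thesis unfolding M_def by (rule someI_ex)
    qed
    define L where "L z g = (SOME q. q\<in>P \<and> (\<forall>y<z. lz y (g y) q))" for z :: 'k and g :: "'k \<Rightarrow> 'p"
    define F where "F g z = (if z = kzero then p else if (\<exists>y. z = ksucc y) then M (THE y. z = ksucc y) (g (THE y. z = ksucc y)) else L z g)" for g :: "'k \<Rightarrow> 'p" and z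
    define pp where "pp = wfrec {(x,y). x < y} F"
    have theI: "(THE y. ksucc a = ksucc y) = a" for a :: 'k
    proof (rule the_equality)
      fix y assume "ksucc a = ksucc y"
      then show "y = a" using ksucc_inj[OF nm, of a y] by simp
    qed simp
    have Fcong: "F g z = F g' z" if "\<forall>y<z. g y = g' y" for g g' z
    proof (cases "\<exists>y. z = ksucc y")
      case True then obtain a where a: "z = ksucc a" by blast
      have "a < z" using a ksucc_gt[OF nm] by simp
      then show ?thesis using that a theI unfolding F_def by auto
    next
      case False
      have "L z g = L z g'" unfolding L_def using that by simp
      then show ?thesis unfolding F_def using False by simp
    qed
    have ppeq: "pp z = F pp z" for z
    proof -
      have "pp z = F (cut pp {(x,y). x < y} z) z" unfolding pp_def by (rule wfrec[OF wf])
      also have "\<dots> = F pp z" by (rule Fcong) (simp add: cut_apply)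
      finally show ?thesis .
    qed
    have inv: "pp z \<in> P \<and> (klimit z \<longrightarrow> (\<forall>y<z. lz y (pp y) (pp z))) \<and> (\<forall>a. z = ksucc a \<longrightarrow> lz a (pp a) (pp z) \<and> MS a (pp z))" for z
    proof (induction z rule: less_induct)
      case (less z)
      consider "z = kzero" | a where "z = ksucc a" | "klimit z" using k_cases[OF nm] by blast
      then show ?case
      proof cases
        case 1
        then have "pp z = p" using ppeq F_def by simp
        then show ?thesis using pP 1 ksucc_nz[OF nm] unfolding klimit_def by metis
      next
        case 2
        have az: "a < z" using 2 ksucc_gt[OF nm] by simp
        have "pp z = M a (pp a)" using ppeq[of z] 2 ksucc_nz[OF nm] theI unfolding F_def by auto
        moreover have "pp a \<in> P" using less az by blast
        ultimately show ?thesis using Mprop 2 klimit_not_succ[OF _ nm] ksucc_inj[OF nm] by metis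
      next
        case 3
        have nz: "z \<noteq> kzero" using 3 unfolding klimit_def by blast
        have ns: "\<not> (\<exists>y. z = ksucc y)" using 3 klimit_not_succ[OF _ nm] by blast
        have ppL: "pp z = L z pp" using ppeq[of z] nz ns unfolding F_def by simp
        have fs: "fusion_seq P leq lz {y. y < z} pp"
          unfolding fusion_seq_def
        proof (intro conjI ballI impI allI)
          fix y assume "y \<in> {y. y < z}"
          then show "pp y \<in> P" using less by blast
        next
          fix y assume y: "y \<in> {y. y < z}"
          have "ksucc y \<le> z" using y ksucc_least by simp
          moreover have "ksucc y \<noteq> z" using ns by blast
          ultimately have "ksucc y < z" by simp
          then show "lz y (pp y) (pp (ksucc y))" using less by blast
        next
          fix e y assume e: "e \<in> {y. y < z}" "klimit e" "y < e"
          have "lz y (pp y) (pp e)" using less e by auto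
          moreover have "pp y \<in> P" "pp e \<in> P" using less e by auto
          ultimately show "leq (pp y) (pp e)" using lzleq by blast
        qed
        then obtain q where "q \<in> P" "\<forall>y\<in>{y. y < z}. lz y (pp y) q"
          using fusL[OF 3] unfolding fusion_ok_def by blast
        then have "\<exists>q. q\<in>P \<and> (\<forall>y<z. lz y (pp y) q)" by auto
        then have "L z pp \<in> P \<and> (\<forall>y<z. lz y (pp y) (L z pp))"
          unfolding L_def by (rule someI_ex)
        then show ?thesis using ppL ns by auto
      qed
    qed
    have fsK: "fusion_seq P leq lz UNIV pp"
      unfolding fusion_seq_def
    proof (intro conjI ballI impI allI)
      fix y :: 'k
      show "pp y \<in> P" using inv by blast
      show "lz y (pp y) (pp (ksucc y))" using inv by blast
    next
      fix e y :: 'k assume e: "klimit e" "y < e"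
      have "lz y (pp y) (pp e)" using inv e by auto
      moreover have "pp y \<in> P" "pp e \<in> P" using inv by auto
      ultimately show "leq (pp y) (pp e)" using lzleq by blast
    qed
    then obtain qs where qsP: "qs \<in> P" and qs: "\<forall>z. lz z (pp z) qs"
      using fusK unfolding fusion_ok_def by blast
    have pp0: "pp kzero = p" using ppeq F_def by simp
    have pqs: "leq p qs" using qs lz0 pP qsP pp0 by metis
    have ex: "\<forall>a. \<exists>f::'k\<Rightarrow>'p. \<exists>D'. D' \<subseteq> D a \<and> D' \<subseteq> range f \<and> predense_above P leq D' qs"
    proof
      fix a
      have ms: "MS a (pp (ksucc a))" using inv by blast
      have le: "leq (pp (ksucc a)) qs" using qs inv qsP lzleq by blast
      have ppP: "pp (ksucc a) \<in> P" using inv by blast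
      from ms obtain D' and f :: "'k \<Rightarrow> 'p" where D': "D' \<subseteq> D a" "D' \<subseteq> range f" "predense_above P leq D' (pp (ksucc a))"
        unfolding MS_def by blast
      have "predense_above P leq D' qs"
        unfolding predense_above_def
      proof (intro ballI impI)
        fix r assume "r \<in> P" "leq qs r"
        then have "leq (pp (ksucc a)) r" using trans[OF ppP qsP _ le] by blast
        then show "\<exists>d\<in>D'. compatible P leq r d" using D'(3) \<open>r \<in> P\<close> unfolding predense_above_def by blast
      qed
      then show "\<exists>f::'k\<Rightarrow>'p. \<exists>D'. D' \<subseteq> D a \<and> D' \<subseteq> range f \<and> predense_above P leq D' qs"
        using D' by blast
    qed
    then obtain fs :: "'k \<Rightarrow> 'k \<Rightarrow> 'p" where fs: "\<forall>a. \<exists>D'. D' \<subseteq> D a \<and> D' \<subseteq> range (fs a) \<and> predense_above P leq D' qs"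
      by metis
    define S where "S = (\<lambda>(a,i). the (h a (fs a i))) ` (UNIV \<times> (UNIV :: 'k set))"
    have CS: "C \<subseteq> S"
    proof
      fix b assume bC: "b \<in> C"
      obtain a r where r: "r \<in> P" "leq qs r" "h a r = Some b" using h4[OF bC qsP pqs] by blast
      obtain D' where D': "D' \<subseteq> D a" "D' \<subseteq> range (fs a)" "predense_above P leq D' qs" using fs by blast
      obtain d where d: "d \<in> D'" "compatible P leq r d" using D'(3) r unfolding predense_above_def by blast
      obtain s where s: "s \<in> P" "leq r s" "leq d s" using d(2) unfolding compatible_def by blast
      have dD: "d \<in> D a" using d D' by blast
      have dP: "d \<in> P" using dD unfolding D_def by blast
      have pr: "leq p r" using trans[OF pP qsP r(1) pqs r(2)] .
      have ps: "leq p s" using trans[OF pP r(1) s(1) pr s(2)] .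
      have "compatible P leq p d" unfolding compatible_def using s ps by blast
      then have dd: "h a d \<noteq> None" "leq p d" using dD unfolding D_def by auto
      have "h a s = h a d" using h2[OF dP s(1) dd(2) s(3) dd(1)] .
      moreover have "h a s = h a r" using h2[OF r(1) s(1) pr s(2)] r(3) by simp
      ultimately have "h a d = Some b" using r(3) by simp
      moreover obtain i where "d = fs a i" using d D' by blast
      ultimately have "b = (\<lambda>(a,i). the (h a (fs a i))) (a,i)" by simp
      then show "b \<in> S" unfolding S_def by (rule image_eqI) simp
    qed
    include cardinal_syntax
    have c0: "|C| \<le>o |S|" using CS by (rule card_of_mono1)
    have c01: "|S| \<le>o |(UNIV :: 'k set) \<times> (UNIV :: 'k set)|" unfolding S_def by (rule card_of_image)
    have c1: "|C| \<le>o |(UNIV :: 'k set) \<times> (UNIV :: 'k set)|" using ordLeq_transitive[OF c0 c01] .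
    have c2: "|(UNIV :: 'k set) \<times> (UNIV :: 'k set)| =o |UNIV :: 'k set|"
      using card_of_Times_same_infinite[OF assms(2)] .
    have c3: "|UNIV :: 'k set| <o cardSuc |UNIV :: 'k set|"
      using cardSuc_greater card_of_Card_order by blast
    have "|C| <o |C|"
      using ordLeq_ordIso_trans[OF c1 c2] c3 ordIso_symmetric[OF assms(3)]
      by (meson ordLeq_ordLess_trans ordLess_ordIso_trans)
    then show False using ordLess_irreflexive by blast
  qed
qed

end
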